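(* Let $k$ be a positive integer and $f$ a function. Let $G_1,\dots,G_p$ be graphs such that each $G_i$ has $n_i$ vertices, contains at most $f(k)\cdot n_i^2$ cliques, and contains no clique of size $k$. Let $G$ be an $n$-vertex graph obtained by $(\le k)$-sums of $G_1,\dots,G_p$. Then for some function $f'$ depending on $f$ and $k$, $G$ contains at most $f'(k)\cdot n^2$ cliques.
   Context: Graphs are simple, finite and undirected. A clique is a set of pairwise adjacent vertices (the empty set and single vertices count). $k$-sum: let $G_1,G_2$ be graphs with disjoint vertex sets and, for $i=1,2$, let $W_i\subseteq V(G_i)$ be a clique of size $k$ in $G_i$. Let $G_i'$ be obtained from $G_i$ by deleting some (possibly no) edges with both endpoints in $W_i$. For a bijection $\phi:W_1\to W_2$, a $k$-sum of $G_1$ and $G_2$ is the graph obtained from the union of $G_1'$ and $G_2'$ by identifying $w$ with $\phi(w)$ for all $w\in W_1$. A $(\le k)$-sum is a $k'$-sum for some $k'\le k$. A graph is obtained by $(\le k)$-sums of $G_1,\dots,G_p$ if it arises from these graphs by repeatedly taking $(\le k)$-sums of graphs already obtained (each $G_i$ being used once), i.e. via a binary tree whose leaves are $G_1,\dots,G_p$ and each internal node is a $(\le k)$-sum of its two children. *)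

theory Defs
  imports Complex_Main "HOL-Library.Multiset"
begin

type_synonym 'a graph = "'a set \<times> 'a set set"

definition graph :: "'a graph \<Rightarrow> bool" where
  "graph G \<longleftrightarrow> finite (fst G) \<and> (\<forall>e\<in>snd G. e \<subseteq> fst G \<and> card e = 2)"

definition clique :: "'a graph \<Rightarrow> 'a set \<Rightarrow> bool" where
  "clique G S \<longleftrightarrow> S \<subseteq> fst G \<and> (\<forall>u\<in>S. \<forall>v\<in>S. u \<noteq> v \<longrightarrow> {u, v} \<in> snd G)"

definition num_cliques :: "'a graph \<Rightarrow> nat" where
  "num_cliques G = card {S. clique G S}"

text \<open>G is a k-sum of G1 and G2: G1, G2 are embedded injectively (h1, h2) into G,
  overlapping exactly in the images of the k-cliques W1, W2 (identified via h2^-1 o h1),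
  after deleting some edges inside W1 resp. W2.\<close>
definition ksum :: "nat \<Rightarrow> 'a graph \<Rightarrow> 'a graph \<Rightarrow> 'a graph \<Rightarrow> bool" where
  "ksum k G1 G2 G \<longleftrightarrow>
    (\<exists>W1 W2 E1 E2 (h1::'a \<Rightarrow> 'a) (h2::'a \<Rightarrow> 'a).
       clique G1 W1 \<and> card W1 = k \<and> clique G2 W2 \<and> card W2 = k \<and>
       E1 \<subseteq> snd G1 \<and> (\<forall>e \<in> snd G1 - E1. e \<subseteq> W1) \<and>
       E2 \<subseteq> snd G2 \<and> (\<forall>e \<in> snd G2 - E2. e \<subseteq> W2) \<and>
       inj_on h1 (fst G1) \<and> inj_on h2 (fst G2) \<and>
       h2 ` W2 = h1 ` W1 \<and>
       h1 ` fst G1 \<inter> h2 ` fst G2 = h1 ` W1 \<and>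
       fst G = h1 ` fst G1 \<union> h2 ` fst G2 \<and>
       snd G = (image h1) ` E1 \<union> (image h2) ` E2)"

definition ksum_le :: "nat \<Rightarrow> 'a graph \<Rightarrow> 'a graph \<Rightarrow> 'a graph \<Rightarrow> bool" where
  "ksum_le k G1 G2 G \<longleftrightarrow> (\<exists>k'\<le>k. ksum k' G1 G2 G)"

text \<open>obtained_by_sums k Gs G: G is obtained by (<= k)-sums of the graphs in the multiset Gs,
  each used exactly once (binary tree with leaves Gs).\<close>
inductive obtained_by_sums :: "nat \<Rightarrow> 'a graph multiset \<Rightarrow> 'a graph \<Rightarrow> bool" for k where
  leaf: "obtained_by_sums k {#H#} H"
| node: "obtained_by_sums k A G1 \<Longrightarrow> obtained_by_sums k B G2 \<Longrightarrow> ksum_le k G1 G2 G \<Longrightarrow> obtained_by_sums k (A + B) G"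

end

theory Submission
  imports Defs
begin

lemma arith0:
  fixes a x1 x2 :: real and j n1 n2 k :: nat
  assumes jk: "j \<le> k" and j1: "j \<le> n1" and n12: "n1 \<le> n2"
    and b1: "x1 \<le> 2^n1" and c1: "x1 \<le> a*(real n1)^2" and c2: "x2 \<le> a*(real n2)^2"
    and a: "a \<ge> 4^k"
  shows "x1 + x2 - 2^j \<le> a*(real (n1+n2-j))^2"
proof -
  obtain t1 where t1: "n1 = j + t1" using j1 le_Suc_ex by blast
  obtain t2 where t2: "n2 = j + t2" using j1 n12 le_Suc_ex by (metis le_trans)
  have t12: "t1 \<le> t2" using t1 t2 n12 by simp
  have R: "real (n1+n2-j) = real j + real t1 + real t2" using t1 t2 by simp
  have "(0::real) \<le> 4^k" by simp
  hence a0: "a \<ge> 0" using a by linarith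
  have p2: "(2::real)^j > 0" by simp
  have RR: "a*(real (n1+n2-j))^2 = a*(real j + real t1 + real t2)^2" using R by simp
  have N1: "a*(real n1)^2 = a*(real j + real t1)^2" using t1 by simp
  have N2: "a*(real n2)^2 = a*(real j + real t2)^2" using t2 by simp
  show ?thesis
  proof (cases "t1 = 0")
    case True
    then show ?thesis using b1 c2 t1 t2 R p2 by simp
  next
    case False
    show ?thesis
    proof (cases "t1 \<le> k")
      case True
      have "(2::real)^n1 \<le> 2^(2*k)" using t1 True jk by (intro power_increasing) auto
      also have "\<dots> = 4^k" by (simp add: power_mult)
      finally have x1a: "x1 \<le> a" using b1 a by linarith
      have o1: "1 \<le> real t1" using False by simp
      hence o2: "1 \<le> real t1 * real t1" by (metis mult_mono' mult_1 zero_le_one)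
      have o3: "0 \<le> real t1 * (2*real j + 2*real t2)" by simp
      have "(real j + real t1 + real t2)^2 = (real j + real t2)^2 + real t1 * real t1 + real t1 * (2*real j + 2*real t2)"
        by (simp add: power2_eq_square algebra_simps)
      with o2 o3 have "(real j + real t2)^2 + 1 \<le> (real j + real t1 + real t2)^2"
        by linarith
      hence "a*((real j + real t2)^2 + 1) \<le> a*(real j + real t1 + real t2)^2"
        using a0 by (rule mult_left_mono)
      then show ?thesis using x1a c2 N2 RR p2 by (simp only: distrib_left; linarith)
    next
      case False
      hence tj: "j \<le> t1" using jk by simp
      have "real j * real j \<le> real t1 * real t2" using tj t12 by (intro mult_mono) auto
      moreover have "0 \<le> real t1 * real t2" by simp
      moreover have "(real j + real t1 + real t2)^2 = (real j + real t2)^2 + (real j + real t1)^2 + 2 * (real t1 * real t2) - real j * real j"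
        by (simp add: power2_eq_square algebra_simps)
      ultimately have "(real j + real t2)^2 + (real j + real t1)^2 \<le> (real j + real t1 + real t2)^2"
        by linarith
      hence "a*((real j + real t2)^2 + (real j + real t1)^2) \<le> a*(real j + real t1 + real t2)^2"
        using a0 by (rule mult_left_mono)
      then show ?thesis using c1 c2 N1 N2 RR p2 by (simp only: distrib_left; linarith)
    qed
  qed
qed

lemma arith:
  fixes a x1 x2 :: real and j n1 n2 k :: nat
  assumes jk: "j \<le> k" and j1: "j \<le> n1" and j2: "j \<le> n2"
    and b1: "x1 \<le> 2^n1" and b2: "x2 \<le> 2^n2" and c1: "x1 \<le> a*(real n1)^2" and c2: "x2 \<le> a*(real n2)^2"
    and a: "a \<ge> 4^k"
  shows "x1 + x2 - 2^j \<le> a*(real (n1+n2-j))^2"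
proof (cases "n1 \<le> n2")
  case True
  then show ?thesis using arith0[OF jk j1 True b1 c1 c2 a] by simp
next
  case False
  hence "n2 \<le> n1" by simp
  from arith0[OF jk j2 this b2 c2 c1 a] show ?thesis by (simp add: add.commute)
qed

lemma side:
  fixes Ga Gb G :: "'a graph" and ha hb :: "'a \<Rightarrow> 'a"
  assumes wa: "\<forall>e\<in>snd Ga. e \<subseteq> fst Ga" and wb: "\<forall>e\<in>snd Gb. e \<subseteq> fst Gb"
  and cW: "clique Ga Wa" and Ea: "Ea \<subseteq> snd Ga" and Eb: "Eb \<subseteq> snd Gb"
  and ia: "inj_on ha (fst Ga)"
  and int: "ha ` fst Ga \<inter> hb ` fst Gb = ha ` Wa"
  and sG: "snd G = image ha ` Ea \<union> image hb ` Eb"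
  and cS: "clique G S" and Ssub: "S \<subseteq> ha ` fst Ga"
  shows "clique Ga (fst Ga \<inter> ha -` S) \<and> S = ha ` (fst Ga \<inter> ha -` S)"
proof -
  let ?T = "fst Ga \<inter> ha -` S"
  have img: "S = ha ` ?T" using Ssub by auto
  have WV: "Wa \<subseteq> fst Ga" using cW unfolding clique_def by auto
  have "\<forall>u\<in>?T. \<forall>v\<in>?T. u \<noteq> v \<longrightarrow> {u,v} \<in> snd Ga"
  proof (intro ballI impI)
    fix u v assume u: "u \<in> ?T" and v: "v \<in> ?T" and uv: "u \<noteq> v"
    have huv: "ha u \<noteq> ha v" using ia u v uv by (auto dest: inj_onD)
    have "{ha u, ha v} \<in> snd G" using cS u v huv unfolding clique_def by auto
    then consider (A) e where "e \<in> Ea" "{ha u, ha v} = ha ` e"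
      | (B) e where "e \<in> Eb" "{ha u, ha v} = hb ` e" using sG by auto
    then show "{u,v} \<in> snd Ga"
    proof cases
      case A
      have "e \<subseteq> fst Ga" using A Ea wa by auto
      moreover have "{u,v} \<subseteq> fst Ga" using u v by auto
      moreover have "ha ` {u,v} = ha ` e" using A(2) by simp
      ultimately have "e = {u,v}" using ia by (metis inj_on_image_eq_iff)
      then show ?thesis using A Ea by auto
    next
      case B
      have "e \<subseteq> fst Gb" using B Eb wb by auto
      hence "ha u \<in> hb ` fst Gb" "ha v \<in> hb ` fst Gb" using B(2) by blast+
      moreover have "ha u \<in> ha ` fst Ga" "ha v \<in> ha ` fst Ga" using u v by auto
      ultimately have "ha u \<in> ha ` Wa" "ha v \<in> ha ` Wa" using int by blast+
      hence "u \<in> Wa" "v \<in> Wa" using inj_on_image_mem_iff[OF ia _ WV] u v by auto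
      then show ?thesis using cW uv unfolding clique_def by auto
    qed
  qed
  thus ?thesis using img unfolding clique_def by auto
qed

lemma num_le_pow:
  assumes "finite (fst G)"
  shows "num_cliques G \<le> 2 ^ card (fst G)"
proof -
  have "{S. clique G S} \<subseteq> Pow (fst G)" unfolding clique_def by auto
  hence "card {S. clique G S} \<le> card (Pow (fst G))" using assms by (intro card_mono) auto
  thus ?thesis unfolding num_cliques_def using card_Pow assms by metis
qed

lemma finite_cliques: "finite (fst G) \<Longrightarrow> finite {S. clique G S}"
  by (rule finite_subset[of _ "Pow (fst G)"]) (auto simp: clique_def)

lemma ksum_bound:
  fixes G1 G2 G :: "'a graph"
  assumes ks: "ksum j G1 G2 G"
    and f1: "finite (fst G1)" and w1: "\<forall>e\<in>snd G1. e \<subseteq> fst G1"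
    and f2: "finite (fst G2)" and w2: "\<forall>e\<in>snd G2. e \<subseteq> fst G2"
  shows "finite (fst G) \<and> (\<forall>e\<in>snd G. e \<subseteq> fst G) \<and>
         card (fst G) + j = card (fst G1) + card (fst G2) \<and>
         j \<le> card (fst G1) \<and> j \<le> card (fst G2) \<and>
         num_cliques G + 2^j \<le> num_cliques G1 + num_cliques G2"
proof -
  obtain W1 W2 E1 E2 h1 h2 where
    cW1: "clique G1 W1" and cd1: "card W1 = j" and cW2: "clique G2 W2" and cd2: "card W2 = j"
    and E1: "E1 \<subseteq> snd G1" and D1: "\<forall>e \<in> snd G1 - E1. e \<subseteq> W1"
    and E2: "E2 \<subseteq> snd G2" and D2: "\<forall>e \<in> snd G2 - E2. e \<subseteq> W2"
    and i1: "inj_on h1 (fst G1)" and i2: "inj_on h2 (fst G2)"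
    and hW: "h2 ` W2 = h1 ` W1"
    and int: "h1 ` fst G1 \<inter> h2 ` fst G2 = h1 ` W1"
    and fG: "fst G = h1 ` fst G1 \<union> h2 ` fst G2"
    and sG: "snd G = (image h1) ` E1 \<union> (image h2) ` E2"
    using ks unfolding ksum_def by (elim exE conjE) (rule that; assumption)
  have WV1: "W1 \<subseteq> fst G1" and WV2: "W2 \<subseteq> fst G2" using cW1 cW2 unfolding clique_def by auto
  have fin: "finite (fst G)" using fG f1 f2 by simp
  have wG: "\<forall>e\<in>snd G. e \<subseteq> fst G"
  proof
    fix e assume "e \<in> snd G"
    then consider (A) e' where "e' \<in> E1" "e = h1 ` e'" | (B) e' where "e' \<in> E2" "e = h2 ` e'"
      using sG by auto
    then show "e \<subseteq> fst G"
    proof cases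
      case A
      then have "e' \<subseteq> fst G1" using E1 w1 by auto
      then show ?thesis using A fG by auto
    next
      case B
      then have "e' \<subseteq> fst G2" using E2 w2 by auto
      then show ?thesis using B fG by auto
    qed
  qed
  have "card (fst G) + card (h1 ` W1) = card (h1 ` fst G1) + card (h2 ` fst G2)"
    using card_Un_Int[of "h1 ` fst G1" "h2 ` fst G2"] f1 f2 fG int by simp
  moreover have "card (h1 ` W1) = j" using cd1 card_image inj_on_subset[OF i1 WV1] by metis
  moreover have "card (h1 ` fst G1) = card (fst G1)" using card_image i1 by blast
  moreover have "card (h2 ` fst G2) = card (fst G2)" using card_image i2 by blast
  ultimately have cardeq: "card (fst G) + j = card (fst G1) + card (fst G2)" by simp
  have j1: "j \<le> card (fst G1)" using cd1 card_mono[OF f1 WV1] by simp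
  have j2: "j \<le> card (fst G2)" using cd2 card_mono[OF f2 WV2] by simp
  let ?C = "\<lambda>H. {S. clique H S}"
  have int2: "h2 ` fst G2 \<inter> h1 ` fst G1 = h2 ` W2" using int hW by (simp add: Int_commute)
  have sG2: "snd G = (image h2) ` E2 \<union> (image h1) ` E1" using sG by (simp add: Un_commute)
  have sub: "?C G \<subseteq> (image h1) ` ?C G1 \<union> (image h2) ` (?C G2 - Pow W2)"
  proof
    fix S assume "S \<in> ?C G"
    hence cS: "clique G S" by simp
    show "S \<in> (image h1) ` ?C G1 \<union> (image h2) ` (?C G2 - Pow W2)"
    proof (cases "S \<subseteq> h1 ` fst G1")
      case True
      from side[OF w1 w2 cW1 E1 E2 i1 int sG cS True] show ?thesis by blast
    next
      case False
      have S2: "S \<subseteq> h2 ` fst G2"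
      proof (rule ccontr)
        assume "\<not> S \<subseteq> h2 ` fst G2"
        then obtain v where v: "v \<in> S" "v \<notin> h2 ` fst G2" by blast
        obtain u where u: "u \<in> S" "u \<notin> h1 ` fst G1" using False by blast
        have SG: "S \<subseteq> fst G" using cS unfolding clique_def by auto
        have uv: "u \<noteq> v" using u v SG fG by blast
        have "{u, v} \<in> snd G" using cS u v uv unfolding clique_def by auto
        then consider (A) e where "e \<in> E1" "{u,v} = h1 ` e" | (B) e where "e \<in> E2" "{u,v} = h2 ` e"
          using sG by auto
        then show False
        proof cases
          case A
          then have "e \<subseteq> fst G1" using E1 w1 by auto
          then show False using A u by blast
        next
          case B
          then have "e \<subseteq> fst G2" using E2 w2 by auto
          then show False using B v by blast
        qed
      qed
      from side[OF w2 w1 cW2 E2 E1 i2 int2 sG2 cS S2]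
      have T: "clique G2 (fst G2 \<inter> h2 -` S)" "S = h2 ` (fst G2 \<inter> h2 -` S)" by auto
      have "\<not> (fst G2 \<inter> h2 -` S) \<subseteq> W2"
      proof
        assume "(fst G2 \<inter> h2 -` S) \<subseteq> W2"
        hence "S \<subseteq> h2 ` W2" using T(2) by blast
        thus False using False hW WV1 by blast
      qed
      thus ?thesis using T by blast
    qed
  qed
  have fc1: "finite (?C G1)" using finite_cliques f1 by blast
  have fc2: "finite (?C G2)" using finite_cliques f2 by blast
  have PW: "Pow W2 \<subseteq> ?C G2" using cW2 unfolding clique_def by blast
  have fW2: "finite W2" using f2 WV2 finite_subset by blast
  have "card (?C G) \<le> card ((image h1) ` ?C G1 \<union> (image h2) ` (?C G2 - Pow W2))"
    using sub fc1 fc2 by (intro card_mono) auto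
  also have "\<dots> \<le> card ((image h1) ` ?C G1) + card ((image h2) ` (?C G2 - Pow W2))"
    by (rule card_Un_le)
  also have "\<dots> \<le> card (?C G1) + card (?C G2 - Pow W2)"
    by (intro add_mono card_image_le) (use fc1 fc2 in auto)
  also have "card (?C G2 - Pow W2) = card (?C G2) - 2^j"
    using card_Diff_subset[OF _ PW] fW2 card_Pow cd2 by (metis finite_Pow_iff)
  finally have "card (?C G) \<le> card (?C G1) + (card (?C G2) - 2^j)" .
  moreover have "2^j \<le> card (?C G2)" using card_mono[OF fc2 PW] card_Pow[of W2] cd2 fW2 by simp
  ultimately have "num_cliques G + 2^j \<le> num_cliques G1 + num_cliques G2"
    unfolding num_cliques_def by linarith
  thus ?thesis using fin wG cardeq j1 j2 by blast
qed

lemma main: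
  fixes Gs :: "'a graph multiset" and a :: real
  assumes ob: "obtained_by_sums k Gs G"
    and lv: "\<forall>H \<in># Gs. graph H \<and> real (num_cliques H) \<le> f k * (real (card (fst H)))^2"
    and af: "a \<ge> f k" and a4: "a \<ge> 4^k"
  shows "finite (fst G) \<and> (\<forall>e\<in>snd G. e \<subseteq> fst G) \<and> real (num_cliques G) \<le> a * (real (card (fst G)))^2"
  using ob lv
proof (induction rule: obtained_by_sums.induct)
  case (leaf H)
  hence g: "graph H" and n: "real (num_cliques H) \<le> f k * (real (card (fst H)))^2" by auto
  have "f k * (real (card (fst H)))^2 \<le> a * (real (card (fst H)))^2"
    using af by (intro mult_right_mono) auto
  then show ?case using g n unfolding graph_def by auto
next
  case (node A G1 B G2 G)
  have IH1: "finite (fst G1) \<and> (\<forall>e\<in>snd G1. e \<subseteq> fst G1) \<and> real (num_cliques G1) \<le> a * (real (card (fst G1)))^2"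
    using node by auto
  have IH2: "finite (fst G2) \<and> (\<forall>e\<in>snd G2. e \<subseteq> fst G2) \<and> real (num_cliques G2) \<le> a * (real (card (fst G2)))^2"
    using node by auto
  obtain j where jk: "j \<le> k" and ks: "ksum j G1 G2 G" using node(3) unfolding ksum_le_def by blast
  have K: "finite (fst G) \<and> (\<forall>e\<in>snd G. e \<subseteq> fst G) \<and>
         card (fst G) + j = card (fst G1) + card (fst G2) \<and>
         j \<le> card (fst G1) \<and> j \<le> card (fst G2) \<and>
         num_cliques G + 2^j \<le> num_cliques G1 + num_cliques G2"
    using ksum_bound[OF ks] IH1 IH2 by blast
  have p1: "real (num_cliques G1) \<le> 2 ^ card (fst G1)"
    using num_le_pow[of G1] IH1 by (metis of_nat_le_iff of_nat_numeral of_nat_power)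
  have p2: "real (num_cliques G2) \<le> 2 ^ card (fst G2)"
    using num_le_pow[of G2] IH2 by (metis of_nat_le_iff of_nat_numeral of_nat_power)
  have X: "real (num_cliques G1) + real (num_cliques G2) - 2^j
      \<le> a * (real (card (fst G1) + card (fst G2) - j))^2"
  proof (rule arith[OF jk _ _ p1 p2 _ _ a4])
    show "j \<le> card (fst G1)" "j \<le> card (fst G2)" using K by blast+
    show "real (num_cliques G1) \<le> a * (real (card (fst G1)))\<^sup>2" using IH1 by blast
    show "real (num_cliques G2) \<le> a * (real (card (fst G2)))\<^sup>2" using IH2 by blast
  qed
  have ce: "card (fst G) + j = card (fst G1) + card (fst G2)" using K by blast
  hence Y: "card (fst G1) + card (fst G2) - j = card (fst G)" by simp
  have "num_cliques G + 2^j \<le> num_cliques G1 + num_cliques G2" using K by blast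
  hence Z: "real (num_cliques G) + 2^j \<le> real (num_cliques G1) + real (num_cliques G2)"
    by (metis of_nat_add of_nat_le_iff of_nat_numeral of_nat_power)
  have R: "real (num_cliques G) \<le> a * (real (card (fst G)))^2" using X Y Z by simp
  have "finite (fst G)" "\<forall>e\<in>snd G. e \<subseteq> fst G" using K by blast+
  with R show ?case by blast
qed

theorem lemma11:
  fixes k :: nat and f :: "nat \<Rightarrow> real"
  assumes "k > 0"
  shows "\<exists>C::real. \<forall>(Gs :: nat graph multiset) (G :: nat graph).
           (\<forall>H \<in># Gs. graph H
               \<and> real (num_cliques H) \<le> f k * (real (card (fst H)))^2
               \<and> \<not> (\<exists>S. clique H S \<and> card S = k))
           \<and> obtained_by_sums k Gs G
           \<longrightarrow> real (num_cliques G) \<le> C * (real (card (fst G)))^2"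
proof (intro exI allI impI)
  fix Gs :: "nat graph multiset" and G :: "nat graph"
  assume h: "(\<forall>H \<in># Gs. graph H
               \<and> real (num_cliques H) \<le> f k * (real (card (fst H)))^2
               \<and> \<not> (\<exists>S. clique H S \<and> card S = k))
           \<and> obtained_by_sums k Gs G"
  have "real (num_cliques G) \<le> max (f k) (4^k) * (real (card (fst G)))^2"
    using main[of k Gs G f "max (f k) (4^k)"] h by auto
  then show "real (num_cliques G) \<le> max (f k) (4^k) * (real (card (fst G)))^2" .
qed


end
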